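(* Assume $C$ satisfies (A1), (A2) and (A3). Then there exist $c>0$ depending only on $N_0,\kappa_2$, and $\Theta_2\ge1$ depending on $\kappa_1,\kappa_2,N_0,d,\alpha$, such that for all $\rho>0$, $\lambda>0$ and all $f\in L^2(\rho^{-1}\mathbb Z^d,\rho^{-d}\mu)$, $$\mathcal E^{\rho,\lambda}_\alpha(f,f)\le c\,\mathcal E^{\rho,\lambda\Theta_2}(f,f),\qquad\text{and in particular}\qquad \mathcal E^{\rho}_\alpha(f,f)\le c\,\mathcal E^{\rho}(f,f).$$
   Context: Fix $d\ge1$, $\alpha\in(0,2)$; $\mu$ counting measure. $C:\mathbb Z^d\times\mathbb Z^d\to[0,\infty)$ with: (A1) $C(x,y)=C(y,x)$, $C(x,x)=0$. (A2) $C(x,y)\le\kappa_1|x-y|^{-d-\alpha}$ for $x\ne y$. (A3) There are $N_0\in\mathbb N,\kappa_2>0$ such that for $x\ne y$ in $\mathbb Z^d$ there are $z_0^{(x,y)}=x,\dots,z_l^{(x,y)}=y$, $l\le N_0$, with $C(z_i^{(x,y)},z_{i+1}^{(x,y)})\ge\kappa_2|x-y|^{-d-\alpha}$; and for every $(\zeta,\xi)$ at most $N_0$ pairs $(x,y)$ have $\zeta=z_k^{(x,y)},\xi=z_{k+1}^{(x,y)}$ for some $k$. For $\rho>0$ set $C^\rho(x,y)=\rho^{d+\alpha}C(\rho x,\rho y)$ on $\rho^{-1}\mathbb Z^d$, and $\mathcal E^{\rho,\lambda}(f,f)=\frac12\sum_{x,y\in\rho^{-1}\mathbb Z^d,|x-y|\le\lambda}(f(x)-f(y))^2C^\rho(x,y)\rho^{-2d}$,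 $\mathcal E^{\rho,\lambda}_\alpha(f,f)=\frac12\sum_{x,y\in\rho^{-1}\mathbb Z^d,|x-y|\le\lambda,x\ne y}(f(x)-f(y))^2|x-y|^{-d-\alpha}\rho^{-2d}$, and $\mathcal E^\rho,\mathcal E^\rho_\alpha$ the same sums without the restriction $|x-y|\le\lambda$. *)

theory Defs
  imports "HOL-Analysis.Analysis"
begin

text \<open>Points of \<int>^d are represented as functions nat \<Rightarrow> int vanishing outside {..<d},
  so that the dimension d can be quantified inside formulas.\<close>

definition Zd :: "nat \<Rightarrow> (nat \<Rightarrow> int) set" where
  "Zd d = {k. \<forall>i\<ge>d. k i = 0}"

definition enorm :: "nat \<Rightarrow> (nat \<Rightarrow> real) \<Rightarrow> real" where
  "enorm d v = sqrt (\<Sum>i<d. (v i)^2)"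

definition zdist :: "nat \<Rightarrow> (nat \<Rightarrow> int) \<Rightarrow> (nat \<Rightarrow> int) \<Rightarrow> real" where
  "zdist d x y = enorm d (\<lambda>i. real_of_int (x i - y i))"

definition scpt :: "real \<Rightarrow> (nat \<Rightarrow> int) \<Rightarrow> (nat \<Rightarrow> real)" where
  "scpt \<rho> k = (\<lambda>i. real_of_int (k i) / \<rho>)"

text \<open>Rescaled conductance C^\<rho>(k/\<rho>, l/\<rho>) = \<rho>^{d+\<alpha>} C(k,l).\<close>
definition Crho :: "nat \<Rightarrow> real \<Rightarrow> ((nat \<Rightarrow> int) \<Rightarrow> (nat \<Rightarrow> int) \<Rightarrow> real) \<Rightarrow> real
    \<Rightarrow> (nat \<Rightarrow> int) \<Rightarrow> (nat \<Rightarrow> int) \<Rightarrow> real" where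
  "Crho d \<alpha> C \<rho> k l = \<rho> powr (real d + \<alpha>) * C k l"

text \<open>Sums of nonnegative terms are taken in ennreal (value \<infinity> allowed).\<close>
definition energy :: "nat \<Rightarrow> real \<Rightarrow> ((nat \<Rightarrow> int) \<Rightarrow> (nat \<Rightarrow> int) \<Rightarrow> bool)
    \<Rightarrow> ((nat \<Rightarrow> int) \<Rightarrow> (nat \<Rightarrow> int) \<Rightarrow> real) \<Rightarrow> ((nat \<Rightarrow> real) \<Rightarrow> real) \<Rightarrow> ennreal" where
  "energy d \<rho> P K f = ennreal (1/2) *
     infsum (\<lambda>(k,l). ennreal ((f (scpt \<rho> k) - f (scpt \<rho> l))^2 * K k l * \<rho> powr (- 2 * real d)))
       {(k,l). k \<in> Zd d \<and> l \<in> Zd d \<and> P k l}"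

text \<open>\<E>^{\<rho>,\<lambda>}(f,f): restriction |x-y| \<le> \<lambda> where |x-y| = |k-l|/\<rho>.\<close>
definition E_C_trunc where
  "E_C_trunc d \<alpha> C \<rho> lam f = energy d \<rho> (\<lambda>k l. zdist d k l / \<rho> \<le> lam) (Crho d \<alpha> C \<rho>) f"

definition E_C where
  "E_C d \<alpha> C \<rho> f = energy d \<rho> (\<lambda>k l. True) (Crho d \<alpha> C \<rho>) f"

definition E_alpha_trunc where
  "E_alpha_trunc d \<alpha> \<rho> lam f = energy d \<rho> (\<lambda>k l. k \<noteq> l \<and> zdist d k l / \<rho> \<le> lam)
     (\<lambda>k l. (zdist d k l / \<rho>) powr (- (real d + \<alpha>))) f"

definition E_alpha where
  "E_alpha d \<alpha> \<rho> f = energy d \<rho> (\<lambda>k l. k \<noteq> l)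
     (\<lambda>k l. (zdist d k l / \<rho>) powr (- (real d + \<alpha>))) f"

definition L2_lattice where
  "L2_lattice d \<rho> f \<longleftrightarrow> (\<lambda>k. (f (scpt \<rho> k))^2 * \<rho> powr (- real d)) summable_on Zd d"

definition A1 where
  "A1 d C \<longleftrightarrow> (\<forall>x\<in>Zd d. \<forall>y\<in>Zd d. C x y \<ge> 0 \<and> C x y = C y x) \<and> (\<forall>x\<in>Zd d. C x x = 0)"

definition A2 where
  "A2 d \<alpha> \<kappa>1 C \<longleftrightarrow> (\<forall>x\<in>Zd d. \<forall>y\<in>Zd d. x \<noteq> y \<longrightarrow>
      C x y \<le> \<kappa>1 * zdist d x y powr (- (real d + \<alpha>)))"

definition A3 where
  "A3 d \<alpha> N0 \<kappa>2 C \<longleftrightarrow>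
    (\<exists>(L :: (nat \<Rightarrow> int) \<Rightarrow> (nat \<Rightarrow> int) \<Rightarrow> nat)
      (Z :: (nat \<Rightarrow> int) \<Rightarrow> (nat \<Rightarrow> int) \<Rightarrow> nat \<Rightarrow> (nat \<Rightarrow> int)).
      (\<forall>x\<in>Zd d. \<forall>y\<in>Zd d. x \<noteq> y \<longrightarrow>
          L x y \<le> N0 \<and> Z x y 0 = x \<and> Z x y (L x y) = y \<and>
          (\<forall>i\<le>L x y. Z x y i \<in> Zd d) \<and>
          (\<forall>i<L x y. C (Z x y i) (Z x y (Suc i)) \<ge> \<kappa>2 * zdist d x y powr (- (real d + \<alpha>)))) \<and>
      (\<forall>\<zeta>\<in>Zd d. \<forall>\<xi>\<in>Zd d.
          finite {(x,y). x \<in> Zd d \<and> y \<in> Zd d \<and> x \<noteq> y \<and>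
                   (\<exists>k<L x y. Z x y k = \<zeta> \<and> Z x y (Suc k) = \<xi>)} \<and>
          card {(x,y). x \<in> Zd d \<and> y \<in> Zd d \<and> x \<noteq> y \<and>
                   (\<exists>k<L x y. Z x y k = \<zeta> \<and> Z x y (Suc k) = \<xi>)} \<le> N0))"

end

theory Submission
  imports Defs
begin

lemma fiber_bound:
  fixes T :: "'a \<Rightarrow> real" and G :: "'b \<Rightarrow> real" and h :: "'a \<Rightarrow> nat \<Rightarrow> 'b" and L :: "'a \<Rightarrow> nat"
  assumes K: "K \<ge> 0"
  and T: "\<And>p. p\<in>S \<Longrightarrow> T p \<le> K * (\<Sum>i<L p. G (h p i))"
  and hB: "\<And>p i. p\<in>S \<Longrightarrow> i < L p \<Longrightarrow> h p i \<in> B"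
  and LN: "\<And>p. p\<in>S \<Longrightarrow> L p \<le> N"
  and fin: "\<And>b. b\<in>B \<Longrightarrow> finite {p\<in>S. \<exists>i<L p. h p i = b}"
  and cardb: "\<And>b. b\<in>B \<Longrightarrow> card {p\<in>S. \<exists>i<L p. h p i = b} \<le> N"
  and G: "\<And>b. b\<in>B \<Longrightarrow> G b \<ge> 0"
  shows "infsum (\<lambda>p. ennreal (T p)) S \<le> ennreal (K*N*N) * infsum (\<lambda>b. ennreal (G b)) B"
proof (rule infsum_le_finite_sums)
  show "(\<lambda>p. ennreal (T p)) summable_on S" by (rule nonneg_summable_on_complete) simp
  fix F assume F: "finite F" "F \<subseteq> S"
  define A where "A = Sigma F (\<lambda>p. {..<L p})"
  define H where "H = (\<lambda>(p,i). h p i)"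
  have finA: "finite A" using F by (simp add: A_def)
  have AB: "H ` A \<subseteq> B" using hB F by (auto simp: A_def H_def)
  have "(\<Sum>p\<in>F. ennreal (T p)) \<le> (\<Sum>p\<in>F. ennreal K * (\<Sum>i<L p. ennreal (G (h p i))))"
  proof (rule sum_mono)
    fix p assume p: "p \<in> F"
    have "ennreal (T p) \<le> ennreal (K * (\<Sum>i<L p. G (h p i)))"
      using T p F by (intro ennreal_leI) auto
    also have "\<dots> = ennreal K * (\<Sum>i<L p. ennreal (G (h p i)))"
    proof -
      have "ennreal (\<Sum>i<L p. G (h p i)) = (\<Sum>i<L p. ennreal (G (h p i)))"
        using G hB p F by (intro sum_ennreal[symmetric]) auto
      then show ?thesis using K G hB p F by (subst ennreal_mult) (auto intro!: sum_nonneg)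
    qed
    finally show "ennreal (T p) \<le> ennreal K * (\<Sum>i<L p. ennreal (G (h p i)))" .
  qed
  also have "\<dots> = ennreal K * (\<Sum>x\<in>A. ennreal (G (H x)))"
    by (simp add: A_def H_def sum_distrib_left sum.Sigma F(1) split_def)
  also have "(\<Sum>x\<in>A. ennreal (G (H x))) = (\<Sum>b\<in>H`A. \<Sum>x\<in>{x\<in>A. H x = b}. ennreal (G (H x)))"
    by (rule sum.image_gen[OF finA])
  also have "\<dots> = (\<Sum>b\<in>H`A. of_nat (card {x\<in>A. H x = b}) * ennreal (G b))"
    by (intro sum.cong refl) simp
  also have "\<dots> \<le> (\<Sum>b\<in>H`A. of_nat (N*N) * ennreal (G b))"
  proof (rule sum_mono)
    fix b assume b: "b \<in> H ` A"
    then have bB: "b \<in> B" using AB by auto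
    let ?Q = "{p\<in>S. \<exists>i<L p. h p i = b}"
    have sub: "{x\<in>A. H x = b} \<subseteq> ?Q \<times> {..<N}"
      using F LN by (force simp: A_def H_def)
    have "card {x\<in>A. H x = b} \<le> card (?Q \<times> {..<N})"
      using fin[OF bB] by (intro card_mono sub) auto
    also have "\<dots> \<le> N * N" using cardb[OF bB] by (simp add: card_cartesian_product)
    finally have "card {x\<in>A. H x = b} \<le> N * N" .
    then show "of_nat (card {x\<in>A. H x = b}) * ennreal (G b) \<le> of_nat (N*N) * ennreal (G b)"
      by (intro mult_right_mono) (simp_all only: of_nat_le_iff, simp)
  qed
  also have "\<dots> = of_nat (N*N) * (\<Sum>b\<in>H`A. ennreal (G b))"
    by (simp add: sum_distrib_left)
  also have "(\<Sum>b\<in>H`A. ennreal (G b)) \<le> infsum (\<lambda>b. ennreal (G b)) B"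
  proof -
    have "(\<Sum>b\<in>H`A. ennreal (G b)) = infsum (\<lambda>b. ennreal (G b)) (H`A)"
      using finA by simp
    also have "\<dots> \<le> infsum (\<lambda>b. ennreal (G b)) B"
      using AB by (intro infsum_mono_neutral nonneg_summable_on_complete) auto
    finally show ?thesis .
  qed
  finally show "(\<Sum>p\<in>F. ennreal (T p)) \<le> ennreal (K*N*N) * infsum (\<lambda>b. ennreal (G b)) B"
    using K by (simp add: ennreal_mult ennreal_of_nat_eq_real_of_nat mult.assoc mult_left_mono)
qed

lemma sq_sum_le: fixes a :: "nat \<Rightarrow> real" shows "(\<Sum>i<n. a i)^2 \<le> real n * (\<Sum>i<n. (a i)^2)"
proof -
  have "(\<Sum>i<n. a i)^2 = (\<Sum>i<n. \<Sum>j<n. a i * a j)"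
    by (simp add: power2_eq_square sum_product)
  also have "\<dots> \<le> (\<Sum>i<n. \<Sum>j<n. (a i)^2/2 + (a j)^2/2)"
  proof (rule sum_mono, rule sum_mono)
    fix i j show "a i * a j \<le> (a i)^2/2 + (a j)^2/2"
      using sum_squares_bound[of "a i" "a j"] by simp
  qed
  also have "\<dots> = (\<Sum>i<n. \<Sum>j<n. (a i)^2/2) + (\<Sum>i<n. \<Sum>j<n. (a j)^2/2)"
    by (simp only: sum.distrib)
  also have "\<dots> = real n * (\<Sum>i<n. (a i)^2)"
    by (simp add: sum_distrib_left[symmetric] sum_divide_distrib[symmetric])
  finally show ?thesis .
qed

lemma path_ineq:
  fixes g c :: "nat \<Rightarrow> real"
  assumes LN: "Lx \<le> N0" and k2: "\<kappa>2 > 0" and cw: "\<And>i. i < Lx \<Longrightarrow> \<kappa>2 * w \<le> c i"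
    and w: "w \<ge> 0" and p1: "p1 \<ge> 0" and p2: "p2 \<ge> 0"
  shows "(g 0 - g Lx)^2 * (p1 * w) * p2 \<le> (real N0/\<kappa>2) * (\<Sum>i<Lx. (g i - g (Suc i))^2 * (p1 * c i) * p2)"
proof -
  have tel: "g 0 - g Lx = (\<Sum>i<Lx. g i - g (Suc i))"
    using sum_lessThan_telescope[of "\<lambda>i. - g i" Lx] by simp
  have "(g 0 - g Lx)^2 \<le> real Lx * (\<Sum>i<Lx. (g i - g (Suc i))^2)"
    unfolding tel by (rule sq_sum_le)
  also have "\<dots> \<le> real N0 * (\<Sum>i<Lx. (g i - g (Suc i))^2)"
    using LN by (intro mult_right_mono sum_nonneg) auto
  finally have D: "(g 0 - g Lx)^2 \<le> real N0 * (\<Sum>i<Lx. (g i - g (Suc i))^2)" .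
  have q: "p1 * w * p2 \<ge> 0" using w p1 p2 by simp
  have "(g 0 - g Lx)^2 * (p1 * w) * p2 = (g 0 - g Lx)^2 * (p1 * w * p2)" by simp
  also have "\<dots> \<le> real N0 * (\<Sum>i<Lx. (g i - g (Suc i))^2) * (p1 * w * p2)"
    using D q by (rule mult_right_mono)
  also have "\<dots> = real N0 * (\<Sum>i<Lx. (g i - g (Suc i))^2 * (p1 * w * p2))"
    by (simp add: sum_distrib_right mult.assoc)
  also have "\<dots> \<le> real N0 * (\<Sum>i<Lx. (g i - g (Suc i))^2 * (p1 * (c i / \<kappa>2) * p2))"
  proof (rule mult_left_mono, rule sum_mono)
    fix i assume i: "i \<in> {..<Lx}"
    have "w \<le> c i / \<kappa>2" using cw[of i] i k2 by (simp add: field_simps)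
    then have "p1 * w * p2 \<le> p1 * (c i / \<kappa>2) * p2"
      using p1 p2 by (intro mult_right_mono mult_left_mono) auto
    then show "(g i - g (Suc i))^2 * (p1 * w * p2) \<le> (g i - g (Suc i))^2 * (p1 * (c i / \<kappa>2) * p2)"
      by (intro mult_left_mono) auto
  qed simp
  also have "\<dots> = (real N0/\<kappa>2) * (\<Sum>i<Lx. (g i - g (Suc i))^2 * (p1 * c i) * p2)"
    by (simp add: sum_divide_distrib sum_distrib_left mult.assoc)
  finally show ?thesis .
qed

lemma zdist_pos:
  assumes "k \<in> Zd d" "l \<in> Zd d" "k \<noteq> l"
  shows "zdist d k l > 0"
proof -
  obtain i where "k i \<noteq> l i" using assms(3) by auto
  have i: "i < d"
  proof (rule ccontr)
    assume "\<not> i < d"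
    hence "k i = 0 \<and> l i = 0" using assms(1,2) by (simp add: Zd_def)
    thus False using \<open>k i \<noteq> l i\<close> by simp
  qed
  have "0 < (real_of_int (k i - l i))^2" using \<open>k i \<noteq> l i\<close> by simp
  also have "\<dots> \<le> (\<Sum>j<d. (real_of_int (k j - l j))^2)"
    using i by (intro member_le_sum) auto
  finally show ?thesis unfolding zdist_def enorm_def by simp
qed

lemma theta_bound:
  fixes a r s \<kappa>1 \<kappa>2 :: real
  assumes k2: "\<kappa>2 > 0" and r: "r > 0" and s: "s > 0" and a: "a > 0"
    and h: "\<kappa>2 * r powr (-a) \<le> \<kappa>1 * s powr (-a)"
  shows "s \<le> (max \<kappa>1 \<kappa>2 / \<kappa>2) powr (1/a) * r"
proof -
  have pos: "\<kappa>2 * r powr (-a) > 0" using k2 r by simp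
  hence k1: "\<kappa>1 > 0" using h s by (smt (verit, best) mult_nonpos_nonneg powr_ge_zero)
  have "\<kappa>2 / r powr a \<le> \<kappa>1 / s powr a" using h by (simp add: powr_minus divide_inverse)
  hence sa: "s powr a \<le> (\<kappa>1/\<kappa>2) * r powr a" using k2 r s by (simp add: field_simps)
  have "s = (s powr a) powr (1/a)" using a s by (simp add: powr_powr)
  also have "\<dots> \<le> ((\<kappa>1/\<kappa>2) * r powr a) powr (1/a)"
    using sa a by (intro powr_mono2) auto
  also have "\<dots> = (\<kappa>1/\<kappa>2) powr (1/a) * r"
  proof -
    have "((\<kappa>1/\<kappa>2) * r powr a) powr (1/a) = (\<kappa>1/\<kappa>2) powr (1/a) * (r powr a) powr (1/a)"
      using k1 k2 r powr_mult[of "\<kappa>1/\<kappa>2" "r powr a" "1/a"] by simp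
    also have "(r powr a) powr (1/a) = r" using r a by (simp add: powr_powr)
    finally show ?thesis by simp
  qed
  also have "\<dots> \<le> (max \<kappa>1 \<kappa>2 / \<kappa>2) powr (1/a) * r"
    using k1 k2 r a by (intro mult_right_mono powr_mono2 divide_right_mono) auto
  finally show ?thesis .
qed

theorem lemma3p1:
  fixes N0 :: nat and \<kappa>2 :: real
  assumes "\<kappa>2 > 0"
  shows "\<exists>c>0. \<forall>(d::nat) (\<alpha>::real) (\<kappa>1::real).
     1 \<le> d \<longrightarrow> 0 < \<alpha> \<longrightarrow> \<alpha> < 2 \<longrightarrow>
     (\<exists>\<Theta>2\<ge>1. \<forall>C. A1 d C \<longrightarrow> A2 d \<alpha> \<kappa>1 C \<longrightarrow> A3 d \<alpha> N0 \<kappa>2 C \<longrightarrow>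
        (\<forall>\<rho>>0. \<forall>lam>0. \<forall>f. L2_lattice d \<rho> f \<longrightarrow>
           E_alpha_trunc d \<alpha> \<rho> lam f \<le> ennreal c * E_C_trunc d \<alpha> C \<rho> (lam * \<Theta>2) f \<and>
           E_alpha d \<alpha> \<rho> f \<le> ennreal c * E_C d \<alpha> C \<rho> f))"
proof -
  have k2: "\<kappa>2 > 0" by (rule assms)
  define c where "c = (real N0 ^ 3 + 1) / \<kappa>2"
  have cpos: "c > 0" using k2 unfolding c_def by (intro divide_pos_pos) (auto intro: add_nonneg_pos)
  define K where "K = real N0 / \<kappa>2"
  have K0: "K \<ge> 0" using k2 by (simp add: K_def)
  have Kc: "K * real N0 * real N0 \<le> c"
    using k2 by (simp add: K_def c_def divide_right_mono power3_eq_cube)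
  show ?thesis
  proof (rule exI[of _ c], intro conjI allI impI cpos)
    fix d :: nat and \<alpha> \<kappa>1 :: real
    assume d: "1 \<le> d" and a0: "0 < \<alpha>" and a2: "\<alpha> < 2"
    have apos: "real d + \<alpha> > 0" using a0 by simp
    define \<Theta> where "\<Theta> = max 1 ((max \<kappa>1 \<kappa>2 / \<kappa>2) powr (1 / (real d + \<alpha>)))"
    show "\<exists>\<Theta>2\<ge>1. \<forall>C. A1 d C \<longrightarrow> A2 d \<alpha> \<kappa>1 C \<longrightarrow> A3 d \<alpha> N0 \<kappa>2 C \<longrightarrow>
        (\<forall>\<rho>>0. \<forall>lam>0. \<forall>f. L2_lattice d \<rho> f \<longrightarrow>
           E_alpha_trunc d \<alpha> \<rho> lam f \<le> ennreal c * E_C_trunc d \<alpha> C \<rho> (lam * \<Theta>2) f \<and>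
           E_alpha d \<alpha> \<rho> f \<le> ennreal c * E_C d \<alpha> C \<rho> f)"
    proof (intro exI[of _ \<Theta>] conjI allI impI)
      show "1 \<le> \<Theta>" by (simp add: \<Theta>_def)
      fix C and \<rho> lam :: real and f :: "(nat \<Rightarrow> real) \<Rightarrow> real"
      assume HA1: "A1 d C" and HA2: "A2 d \<alpha> \<kappa>1 C" and HA3: "A3 d \<alpha> N0 \<kappa>2 C"
        and rho: "\<rho> > 0" and lam: "lam > 0" and L2: "L2_lattice d \<rho> f"
      obtain L Z where
        LZ1: "\<forall>x\<in>Zd d. \<forall>y\<in>Zd d. x \<noteq> y \<longrightarrow>
          L x y \<le> N0 \<and> Z x y 0 = x \<and> Z x y (L x y) = y \<and>
          (\<forall>i\<le>L x y. Z x y i \<in> Zd d) \<and>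
          (\<forall>i<L x y. C (Z x y i) (Z x y (Suc i)) \<ge> \<kappa>2 * zdist d x y powr (- (real d + \<alpha>)))"
        and LZ2: "\<forall>\<zeta>\<in>Zd d. \<forall>\<xi>\<in>Zd d.
          finite {(x,y). x \<in> Zd d \<and> y \<in> Zd d \<and> x \<noteq> y \<and>
                   (\<exists>k<L x y. Z x y k = \<zeta> \<and> Z x y (Suc k) = \<xi>)} \<and>
          card {(x,y). x \<in> Zd d \<and> y \<in> Zd d \<and> x \<noteq> y \<and>
                   (\<exists>k<L x y. Z x y k = \<zeta> \<and> Z x y (Suc k) = \<xi>)} \<le> N0"
        using HA3 unfolding A3_def by (elim exE conjE) (rule that)
      note LZ = LZ1[rule_format]
      note LZc = LZ2[rule_format]
      have C0: "\<And>x y. x\<in>Zd d \<Longrightarrow> y\<in>Zd d \<Longrightarrow> C x y \<ge> 0" using HA1 unfolding A1_def by blast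
      have Cxx: "\<And>x. x\<in>Zd d \<Longrightarrow> C x x = 0" using HA1 unfolding A1_def by blast
      have pw0: "(z/\<rho>) powr (-e) = \<rho> powr e * z powr (-e)"
        if "z \<ge> 0" for z e :: real
      proof -
        have "(z/\<rho>) powr (-e) = z powr (-e) / \<rho> powr (-e)"
          using that rho by (simp add: powr_divide)
        also have "\<rho> powr (-e) = inverse (\<rho> powr e)" by (rule powr_minus)
        finally show ?thesis by (simp add: divide_inverse mult.commute)
      qed
      have pw: "(z/\<rho>) powr (-(real d + \<alpha>)) = \<rho> powr (real d + \<alpha>) * z powr (-(real d + \<alpha>))"
        if "z \<ge> 0" for z
        using pw0[OF that] by blast
      have main: "energy d \<rho> P (\<lambda>k l. (zdist d k l / \<rho>) powr (- (real d + \<alpha>))) f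
          \<le> ennreal c * energy d \<rho> Q (Crho d \<alpha> C \<rho>) f"
        if PQ1: "\<And>k l. P k l \<Longrightarrow> k \<noteq> l"
        and PQ2: "\<And>k l i. k\<in>Zd d \<Longrightarrow> l\<in>Zd d \<Longrightarrow> P k l \<Longrightarrow> i < L k l \<Longrightarrow>
                 Q (Z k l i) (Z k l (Suc i))"
        for P Q
      proof -
        define S where "S = {(k,l). k \<in> Zd d \<and> l \<in> Zd d \<and> P k l}"
        define B where "B = {(k,l). k \<in> Zd d \<and> l \<in> Zd d \<and> Q k l}"
        define T where "T = (\<lambda>(k,l). (f (scpt \<rho> k) - f (scpt \<rho> l))^2 *
              (zdist d k l / \<rho>) powr (- (real d + \<alpha>)) * \<rho> powr (- 2 * real d))"
        define G where "G = (\<lambda>(k,l). (f (scpt \<rho> k) - f (scpt \<rho> l))^2 *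
              Crho d \<alpha> C \<rho> k l * \<rho> powr (- 2 * real d))"
        define L' where "L' = (\<lambda>(k::nat\<Rightarrow>int,l::nat\<Rightarrow>int). L k l)"
        define h where "h = (\<lambda>(k,l) i. (Z k l i, Z k l (Suc i)))"
        have fb: "infsum (\<lambda>p. ennreal (T p)) S \<le> ennreal (K*N0*N0) * infsum (\<lambda>b. ennreal (G b)) B"
        proof (rule fiber_bound[where L=L' and h=h])
          show "K \<ge> 0" by (rule K0)
        next
          fix p assume pS: "p \<in> S"
          obtain k l where p: "p = (k,l)" by fastforce
          have k: "k \<in> Zd d" and l: "l \<in> Zd d" and Pkl: "P k l" using pS p by (auto simp: S_def)
          have kl: "k \<noteq> l" using PQ1[OF Pkl] .
          note Z = LZ[OF k l kl]
          define g where "g = (\<lambda>i. f (scpt \<rho> (Z k l i)))"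
          have "(g 0 - g (L k l))^2 * (\<rho> powr (real d + \<alpha>) * zdist d k l powr (-(real d + \<alpha>))) * \<rho> powr (- 2 * real d)
             \<le> (real N0/\<kappa>2) * (\<Sum>i<L k l. (g i - g (Suc i))^2 * (\<rho> powr (real d + \<alpha>) * C (Z k l i) (Z k l (Suc i))) * \<rho> powr (- 2 * real d))"
            using Z k2 by (intro path_ineq) auto
          moreover have zd0: "zdist d k l \<ge> 0" by (simp add: zdist_def enorm_def sum_nonneg)
          moreover have "T p = (g 0 - g (L k l))^2 * (\<rho> powr (real d + \<alpha>) * zdist d k l powr (-(real d + \<alpha>))) * \<rho> powr (- 2 * real d)"
            using Z pw[OF zd0] by (simp add: p T_def g_def)
          moreover have "(\<Sum>i<L' p. G (h p i)) = (\<Sum>i<L k l. (g i - g (Suc i))^2 * (\<rho> powr (real d + \<alpha>) * C (Z k l i) (Z k l (Suc i))) * \<rho> powr (- 2 * real d))"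
            by (simp add: p L'_def h_def G_def g_def Crho_def)
          ultimately show "T p \<le> K * (\<Sum>i<L' p. G (h p i))"
            by (simp only: K_def)
        next
          fix p i assume pS: "p \<in> S" and i: "i < L' p"
          obtain k l where p: "p = (k,l)" by fastforce
          have k: "k \<in> Zd d" and l: "l \<in> Zd d" and Pkl: "P k l" using pS p by (auto simp: S_def)
          have kl: "k \<noteq> l" using PQ1[OF Pkl] .
          note Z = LZ[OF k l kl]
          show "h p i \<in> B" using Z i PQ2[OF k l Pkl, of i] by (auto simp: p h_def B_def L'_def)
        next
          fix p assume pS: "p \<in> S"
          obtain k l where p: "p = (k,l)" by fastforce
          have k: "k \<in> Zd d" and l: "l \<in> Zd d" and Pkl: "P k l" using pS p by (auto simp: S_def)
          have kl: "k \<noteq> l" using PQ1[OF Pkl] .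
          show "L' p \<le> N0" using LZ[OF k l kl] by (simp add: p L'_def)
        next
          fix b assume bB: "b \<in> B"
          obtain \<zeta> \<xi> where b: "b = (\<zeta>,\<xi>)" by fastforce
          have z: "\<zeta> \<in> Zd d" "\<xi> \<in> Zd d" using bB b by (auto simp: B_def)
          have sub: "{p\<in>S. \<exists>i<L' p. h p i = b} \<subseteq> {(x,y). x \<in> Zd d \<and> y \<in> Zd d \<and> x \<noteq> y \<and>
                   (\<exists>k<L x y. Z x y k = \<zeta> \<and> Z x y (Suc k) = \<xi>)}"
            using PQ1 by (auto simp: S_def L'_def h_def b)
          show "finite {p\<in>S. \<exists>i<L' p. h p i = b}"
            using LZc[OF z] sub by (blast intro: finite_subset)
          show "card {p\<in>S. \<exists>i<L' p. h p i = b} \<le> N0"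
            using LZc[OF z] sub by (meson card_mono le_trans)
        next
          fix b assume bB: "b \<in> B"
          obtain \<zeta> \<xi> where b: "b = (\<zeta>,\<xi>)" by fastforce
          have z: "\<zeta> \<in> Zd d" "\<xi> \<in> Zd d" using bB b by (auto simp: B_def)
          show "G b \<ge> 0" using C0[OF z] rho by (simp add: G_def b Crho_def)
        qed
        have eqT: "infsum (\<lambda>(k,l). ennreal ((f (scpt \<rho> k) - f (scpt \<rho> l))^2 *
              (zdist d k l / \<rho>) powr (- (real d + \<alpha>)) * \<rho> powr (- 2 * real d))) S
            = infsum (\<lambda>p. ennreal (T p)) S"
          by (simp add: T_def split_def)
        have eqG: "infsum (\<lambda>(k,l). ennreal ((f (scpt \<rho> k) - f (scpt \<rho> l))^2 *
              Crho d \<alpha> C \<rho> k l * \<rho> powr (- 2 * real d))) B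
            = infsum (\<lambda>p. ennreal (G p)) B"
          by (simp add: G_def split_def)
        have "ennreal (1/2) * infsum (\<lambda>p. ennreal (T p)) S
            \<le> ennreal (1/2) * (ennreal (K*N0*N0) * infsum (\<lambda>b. ennreal (G b)) B)"
          using fb by (rule mult_left_mono) simp
        also have "\<dots> \<le> ennreal (1/2) * (ennreal c * infsum (\<lambda>b. ennreal (G b)) B)"
          using Kc by (intro mult_left_mono mult_right_mono ennreal_leI) auto
        also have "\<dots> = ennreal c * (ennreal (1/2) * infsum (\<lambda>b. ennreal (G b)) B)"
          by (simp add: ac_simps)
        finally show ?thesis
          unfolding energy_def eqT[unfolded S_def] eqG[unfolded B_def] by (simp only: S_def B_def)
      qed
      show "E_alpha_trunc d \<alpha> \<rho> lam f \<le> ennreal c * E_C_trunc d \<alpha> C \<rho> (lam * \<Theta>) f"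
        unfolding E_alpha_trunc_def E_C_trunc_def
      proof (rule main)
        fix k l assume "k \<noteq> l \<and> zdist d k l / \<rho> \<le> lam" then show "k \<noteq> l" by simp
      next
        fix k l i assume k: "k\<in>Zd d" and l: "l\<in>Zd d" and Pkl: "k \<noteq> l \<and> zdist d k l / \<rho> \<le> lam"
          and i: "i < L k l"
        note Z = LZ[OF k l conjunct1[OF Pkl]]
        define r where "r = zdist d k l"
        define s where "s = zdist d (Z k l i) (Z k l (Suc i))"
        have r: "r > 0" unfolding r_def using zdist_pos k l Pkl by blast
        have zi: "Z k l i \<in> Zd d" "Z k l (Suc i) \<in> Zd d" using Z i by auto
        have lowC: "C (Z k l i) (Z k l (Suc i)) \<ge> \<kappa>2 * r powr (-(real d + \<alpha>))"
          using Z i by (simp add: r_def)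
        have posl: "\<kappa>2 * r powr (-(real d + \<alpha>)) > 0" using k2 r by simp
        have ne: "Z k l i \<noteq> Z k l (Suc i)"
        proof
          assume eq: "Z k l i = Z k l (Suc i)"
          then have "C (Z k l i) (Z k l (Suc i)) = 0" using Cxx zi by simp
          then show False using lowC posl by simp
        qed
        have s: "s > 0" unfolding s_def using zdist_pos zi ne by blast
        have upC: "C (Z k l i) (Z k l (Suc i)) \<le> \<kappa>1 * s powr (-(real d + \<alpha>))"
          using HA2 zi ne unfolding A2_def s_def by blast
        have "s \<le> (max \<kappa>1 \<kappa>2 / \<kappa>2) powr (1 / (real d + \<alpha>)) * r"
          using lowC upC by (intro theta_bound k2 r s apos) simp
        also have "\<dots> \<le> \<Theta> * r" using r by (intro mult_right_mono) (auto simp: \<Theta>_def)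
        finally have "s \<le> \<Theta> * r" .
        moreover have "r / \<rho> \<le> lam" using Pkl by (simp add: r_def)
        ultimately have "s / \<rho> \<le> \<Theta> * (r / \<rho>)" using rho by (simp add: divide_right_mono)
        also have "\<dots> \<le> \<Theta> * lam" using \<open>r / \<rho> \<le> lam\<close> by (intro mult_left_mono) (auto simp: \<Theta>_def)
        finally show "zdist d (Z k l i) (Z k l (Suc i)) / \<rho> \<le> lam * \<Theta>"
          by (simp add: s_def mult.commute)
      qed
      show "E_alpha d \<alpha> \<rho> f \<le> ennreal c * E_C d \<alpha> C \<rho> f"
        unfolding E_alpha_def E_C_def by (rule main) auto
    qed
  qed
qed

end
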